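(* Let $X$ be a non-empty finite set and $\mathcal{P}$ a partition of $X$ such that $\mathcal{P}$ has exactly $m_i\ge 2$ blocks of size $n_i\ge 2$ for $i=1,\dots,p$ (the $n_i$ pairwise distinct), exactly one block of each of the sizes $l_1,\dots,l_q$ with each $l_i\ge 2$ (these sizes distinct from each other and from the $n_i$), and $t$ singleton blocks, and no other blocks ($p,q,t$ may be $0$). Then $$\operatorname{rank}(T(X,\mathcal{P}):\Sigma(X,\mathcal{P}))=\binom{p+q}{2}+p+h(p,q,t),$$ where $h(p,q,0)=0$, $h(p,q,1)=p+q$ and $h(p,q,t)=p+q+1$ for $t\ge 2$.
   Context: $T(X,\mathcal{P})$ is the semigroup (under composition) of maps $f:X\to X$ such that for every block $P$ of $\mathcal{P}$ there is a block $Q$ with $Pf\subseteq Q$; $\Sigma(X,\mathcal{P})$ is the subsemigroup of those $f\in T(X,\mathcal{P})$ whose image intersects every block of $\mathcal{P}$. For a subsemigroup $U$ of a semigroup $V$, the relative rank $\operatorname{rank}(V:U)$ is the least cardinality of a subset $W\subseteq V$ such that $U\cup W$ generates $V$ as a semigroup. *)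

theory Defs
  imports Main "HOL-Library.FuncSet" "HOL-Library.Disjoint_Sets"
begin

text \<open>Maps X -> X are represented extensionally (undefined outside X);
  the semigroup operation is composition restricted to X.\<close>

definition Tpart :: "'a set \<Rightarrow> 'a set set \<Rightarrow> ('a \<Rightarrow> 'a) set" where
  "Tpart X P = {f \<in> X \<rightarrow>\<^sub>E X. \<forall>B\<in>P. \<exists>C\<in>P. f ` B \<subseteq> C}"

definition Sigmapart :: "'a set \<Rightarrow> 'a set set \<Rightarrow> ('a \<Rightarrow> 'a) set" where
  "Sigmapart X P = {f \<in> Tpart X P. \<forall>B\<in>P. f ` X \<inter> B \<noteq> {}}"

inductive_set sgen :: "'a set \<Rightarrow> ('a \<Rightarrow> 'a) set \<Rightarrow> ('a \<Rightarrow> 'a) set"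
  for X :: "'a set" and S :: "('a \<Rightarrow> 'a) set" where
  base: "f \<in> S \<Longrightarrow> f \<in> sgen X S"
| comp: "f \<in> sgen X S \<Longrightarrow> g \<in> sgen X S \<Longrightarrow> compose X g f \<in> sgen X S"

definition relrank :: "'a set \<Rightarrow> ('a \<Rightarrow> 'a) set \<Rightarrow> ('a \<Rightarrow> 'a) set \<Rightarrow> nat" where
  "relrank X V U = (LEAST k. \<exists>W. W \<subseteq> V \<and> finite W \<and> card W = k \<and> sgen X (U \<union> W) = V)"

definition hfun :: "nat \<Rightarrow> nat \<Rightarrow> nat \<Rightarrow> nat" where
  "hfun p q t = (if t = 0 then 0 else if t = 1 then p + q else p + q + 1)"

end

theory Submission
  imports Defs
begin
locale pt =
  fixes X :: "'a set" and P :: "'a set set"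
  assumes finX: "finite X" and part: "partition_on X P"
begin

abbreviation "TT \<equiv> Tpart X P"
abbreviation "SS \<equiv> Sigmapart X P"

lemma finP: "finite P"
  using finite_elements[OF finX part] .

lemma blk_ne: "B \<in> P \<Longrightarrow> B \<noteq> {}"
  using partition_onD3[OF part] by auto

lemma blk_sub: "B \<in> P \<Longrightarrow> B \<subseteq> X"
  using partition_onD1[OF part] by auto

lemma blk_fin: "B \<in> P \<Longrightarrow> finite B"
  using blk_sub finX finite_subset by blast

lemma disj: "B \<in> P \<Longrightarrow> C \<in> P \<Longrightarrow> x \<in> B \<Longrightarrow> x \<in> C \<Longrightarrow> B = C"
  using partition_onD2[OF part] unfolding disjoint_def by blast

lemma ex_blk: "x \<in> X \<Longrightarrow> \<exists>B\<in>P. x \<in> B"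
  using partition_onD1[OF part] by auto

definition bm :: "('a \<Rightarrow> 'a) \<Rightarrow> 'a set \<Rightarrow> 'a set" where
  "bm f B = (THE C. C \<in> P \<and> f ` B \<subseteq> C)"

lemma bm_eq: assumes "B \<in> P" "C \<in> P" "f ` B \<subseteq> C" shows "bm f B = C"
  unfolding bm_def
proof (rule the_equality)
  show "C \<in> P \<and> f ` B \<subseteq> C" using assms by auto
  fix C' assume "C' \<in> P \<and> f ` B \<subseteq> C'"
  moreover obtain x where "x \<in> B" using blk_ne[OF assms(1)] by auto
  ultimately show "C' = C" using assms disj[of C' C "f x"] by auto
qed

lemma T_D: "f \<in> TT \<Longrightarrow> B \<in> P \<Longrightarrow> \<exists>C\<in>P. f ` B \<subseteq> C"
  unfolding Tpart_def by auto

lemma bm: assumes "f \<in> TT" "B \<in> P" shows "bm f B \<in> P" "f ` B \<subseteq> bm f B"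
  using T_D[OF assms] bm_eq[OF assms(2)] by auto

lemma bm_pt: "f \<in> TT \<Longrightarrow> B \<in> P \<Longrightarrow> x \<in> B \<Longrightarrow> f x \<in> bm f B"
  using bm by blast

lemma T_ext: "f \<in> TT \<Longrightarrow> x \<notin> X \<Longrightarrow> f x = undefined"
  unfolding Tpart_def by (auto simp: PiE_def extensional_def)

lemma T_X: "f \<in> TT \<Longrightarrow> x \<in> X \<Longrightarrow> f x \<in> X"
  unfolding Tpart_def by auto

lemma TI: assumes "\<And>x. x \<notin> X \<Longrightarrow> f x = undefined"
  and "\<And>B. B \<in> P \<Longrightarrow> \<exists>C\<in>P. \<forall>x\<in>B. f x \<in> C"
  shows "f \<in> TT"
proof -
  have "f x \<in> X" if xX: "x \<in> X" for x
  proof -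
    obtain B where "B \<in> P" "x \<in> B" using ex_blk xX by auto
    then obtain C where "C \<in> P" "f x \<in> C" using assms(2) by blast
    then show ?thesis using blk_sub by auto
  qed
  moreover have "\<exists>C\<in>P. f ` B \<subseteq> C" if "B \<in> P" for B
    using assms(2)[OF that] by blast
  ultimately show ?thesis using assms unfolding Tpart_def by (auto simp: PiE_def extensional_def)
qed

lemma S_iff: "f \<in> SS \<longleftrightarrow> f \<in> TT \<and> bm f ` P = P"
proof
  assume a: "f \<in> SS"
  then have fT: "f \<in> TT" unfolding Sigmapart_def by auto
  have "bm f ` P \<subseteq> P" using bm[OF fT] by auto
  moreover have "E \<in> bm f ` P" if EP: "E \<in> P" for E
  proof -
    obtain x where x: "x \<in> X" "f x \<in> E" using a EP unfolding Sigmapart_def by auto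
    obtain B where B: "B \<in> P" "x \<in> B" using ex_blk x by auto
    have "f x \<in> bm f B" using bm_pt[OF fT B(1,2)] .
    then have "E = bm f B" using disj[OF EP bm(1)[OF fT B(1)]] x by auto
    then show ?thesis using B by auto
  qed
  ultimately show "f \<in> TT \<and> bm f ` P = P" using fT by auto
next
  assume a: "f \<in> TT \<and> bm f ` P = P"
  have "f ` X \<inter> E \<noteq> {}" if EP: "E \<in> P" for E
  proof -
    obtain B where B: "B \<in> P" "E = bm f B" using a EP by blast
    obtain x where "x \<in> B" using blk_ne[OF B(1)] by auto
    then show ?thesis using bm_pt[of f B x] a B blk_sub[OF B(1)] by blast
  qed
  then show "f \<in> SS" using a unfolding Sigmapart_def by auto
qed

lemma SI: assumes "f \<in> TT" "\<And>E. E \<in> P \<Longrightarrow> \<exists>x\<in>X. f x \<in> E" shows "f \<in> SS"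
  using assms unfolding Sigmapart_def by blast

lemma S_T: "f \<in> SS \<Longrightarrow> f \<in> TT" unfolding Sigmapart_def by auto

lemma comp_T: assumes "f \<in> TT" "g \<in> TT" shows "compose X g f \<in> TT"
  and "B \<in> P \<Longrightarrow> bm (compose X g f) B = bm g (bm f B)"
proof -
  show "compose X g f \<in> TT"
  proof (rule TI)
    show "compose X g f x = undefined" if "x \<notin> X" for x using that by (simp add: compose_def)
    fix B assume B: "B \<in> P"
    show "\<exists>C\<in>P. \<forall>x\<in>B. compose X g f x \<in> C"
      using bm[OF assms(1) B] bm[OF assms(2) bm(1)[OF assms(1) B]] blk_sub[OF B]
      by (intro bexI[of _ "bm g (bm f B)"]) (auto simp: compose_def)
  qed
  assume B: "B \<in> P"
  show "bm (compose X g f) B = bm g (bm f B)"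
    using bm[OF assms(1) B] bm[OF assms(2) bm(1)[OF assms(1) B]] blk_sub[OF B]
    by (intro bm_eq[OF B]) (auto simp: compose_def)
qed

lemma sgen_T: "f \<in> sgen X S \<Longrightarrow> S \<subseteq> TT \<Longrightarrow> f \<in> TT"
  by (induction rule: sgen.induct) (auto intro: comp_T)

lemma bm_inj_iff: "f \<in> TT \<Longrightarrow> bm f ` P = P \<longleftrightarrow> inj_on (bm f) P"
proof -
  assume fT: "f \<in> TT"
  have sub: "bm f ` P \<subseteq> P" using bm[OF fT] by auto
  show ?thesis
  proof
    assume "bm f ` P = P" then show "inj_on (bm f) P"
      using finP by (simp add: eq_card_imp_inj_on)
  next
    assume "inj_on (bm f) P" then show "bm f ` P = P"
      using sub finP by (metis card_image card_subset_eq)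
  qed
qed

end

context pt begin

definition G :: "nat set \<Rightarrow> ('a \<Rightarrow> 'a) set" where
 "G \<tau> = {f \<in> TT. (\<forall>B\<in>P. inj_on f B) \<and> (\<exists>B1 B2. B1 \<in> P \<and> B2 \<in> P \<and> B1 \<noteq> B2 \<and> bm f B1 = bm f B2
     \<and> {card B1, card B2} = \<tau> \<and>
     (\<forall>B\<in>P. \<forall>B'\<in>P. bm f B = bm f B' \<longrightarrow> B = B' \<or> (B = B1 \<and> B' = B2) \<or> (B = B2 \<and> B' = B1)))}"

lemma G_notS: "f \<in> G \<tau> \<Longrightarrow> f \<notin> SS"
  unfolding G_def using S_iff bm_inj_iff by (auto dest: inj_onD)

lemma G_disj: "f \<in> G \<tau> \<Longrightarrow> f \<in> G \<tau>' \<Longrightarrow> \<tau> = \<tau>'"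
proof -
  assume a: "f \<in> G \<tau>" "f \<in> G \<tau>'"
  from a(1) obtain B1 B2 where 1: "B1 \<in> P" "B2 \<in> P" "B1 \<noteq> B2" "{card B1, card B2} = \<tau>"
    "\<forall>B\<in>P. \<forall>B'\<in>P. bm f B = bm f B' \<longrightarrow> B = B' \<or> (B = B1 \<and> B' = B2) \<or> (B = B2 \<and> B' = B1)"
    unfolding G_def by blast
  from a(2) obtain C1 C2 where 2: "C1 \<in> P" "C2 \<in> P" "C1 \<noteq> C2" "{card C1, card C2} = \<tau>'"
    "bm f C1 = bm f C2" unfolding G_def by blast
  from 1(5) 2 have "(C1 = B1 \<and> C2 = B2) \<or> (C1 = B2 \<and> C2 = B1)" by blast
  then show ?thesis using 1(4) 2(4) by auto
qed

lemma sum_le_eq: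
  fixes a b :: "'b \<Rightarrow> nat"
  assumes "finite A" "\<forall>x\<in>A. a x \<le> b x" "sum a A = sum b A" "x \<in> A"
  shows "a x = b x"
proof (rule ccontr)
  assume "a x \<noteq> b x"
  then have "a x < b x" using assms by force
  then have "sum a A < sum b A" using sum_strict_mono_ex1[OF assms(1,2)] assms(4) by blast
  then show False using assms(3) by simp
qed

lemma sum_card_P: "sum card P = card X"
  using card_Union_disjoint[of P] partition_onD1[OF part] partition_onD2[OF part] blk_fin
  unfolding disjoint_def pairwise_def disjnt_def by auto

lemma inj_bij_blocks:
  assumes fT: "f \<in> TT" and bij: "bm f ` P = P" and inj: "\<forall>B\<in>P. inj_on f B" and B: "B \<in> P"
  shows "f ` B = bm f B"
proof -
  have injb: "inj_on (bm f) P" using bm_inj_iff[OF fT] bij by auto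
  have le: "\<forall>B\<in>P. card B \<le> card (bm f B)"
  proof
    fix B assume B: "B \<in> P"
    have "card B = card (f ` B)" using inj B by (simp add: card_image)
    also have "\<dots> \<le> card (bm f B)" using bm[OF fT B] blk_fin by (simp add: card_mono)
    finally show "card B \<le> card (bm f B)" .
  qed
  have "sum (\<lambda>B. card (bm f B)) P = sum card (bm f ` P)"
    using sum.reindex[OF injb, of card] by simp
  also have "\<dots> = sum card P" using bij by simp
  finally have eq: "sum card P = sum (\<lambda>B. card (bm f B)) P" by simp
  have "card B = card (bm f B)" using sum_le_eq[OF finP le eq B] .
  moreover have "card (f ` B) = card B" using inj B by (simp add: card_image)
  ultimately show ?thesis using bm[OF fT B] blk_fin[OF bm(1)[OF fT B]] card_subset_eq by metis
qed

lemma G_closed: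
  assumes "f \<in> sgen X (SS \<union> W)" "W \<subseteq> TT"
  shows "f \<in> G \<tau> \<Longrightarrow> \<exists>w\<in>W. w \<in> G \<tau>"
  using assms
proof (induction arbitrary: \<tau> rule: sgen.induct)
  case (base f)
  then show ?case using G_notS by blast
next
  case (comp f g)
  have sub: "SS \<union> W \<subseteq> TT" using comp.prems S_T by auto
  have fT: "f \<in> TT" using sgen_T[OF comp.hyps(1) sub] .
  have gT: "g \<in> TT" using sgen_T[OF comp.hyps(2) sub] .
  let ?h = "compose X g f"
  have bmh: "\<And>B. B \<in> P \<Longrightarrow> bm ?h B = bm g (bm f B)" using comp_T(2)[OF fT gT] .
  from comp.prems(1) obtain B1 B2 where 1: "B1 \<in> P" "B2 \<in> P" "B1 \<noteq> B2" "bm ?h B1 = bm ?h B2"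
    "{card B1, card B2} = \<tau>"
    "\<forall>B\<in>P. \<forall>B'\<in>P. bm ?h B = bm ?h B' \<longrightarrow> B = B' \<or> (B = B1 \<and> B' = B2) \<or> (B = B2 \<and> B' = B1)"
    and injh: "\<forall>B\<in>P. inj_on ?h B" unfolding G_def by blast
  have injf: "\<forall>B\<in>P. inj_on f B"
  proof
    fix B assume B: "B \<in> P"
    have "inj_on (g \<circ> f) B" using injh B blk_sub[OF B]
      by (auto simp: inj_on_def compose_def subset_iff)
    then show "inj_on f B" using inj_on_imageI2 by blast
  qed
  show ?case
  proof (cases "bm f ` P = P")
    case True
    have injb: "inj_on (bm f) P" using bm_inj_iff[OF fT] True by auto
    have "g \<in> G \<tau>" unfolding G_def
    proof (intro CollectI conjI)
      show "g \<in> TT" using gT .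
      show "\<forall>E\<in>P. inj_on g E"
      proof
        fix E assume "E \<in> P"
        then obtain B where B: "B \<in> P" "E = bm f B" using True by blast
        have "inj_on (g \<circ> f) B" using injh B blk_sub[OF B(1)]
          by (auto simp: inj_on_def compose_def subset_iff)
        then have "inj_on g (f ` B)" by (rule inj_on_imageI)
        then show "inj_on g E" using inj_bij_blocks[OF fT True injf B(1)] B by simp
      qed
      show "\<exists>C1 C2. C1 \<in> P \<and> C2 \<in> P \<and> C1 \<noteq> C2 \<and> bm g C1 = bm g C2 \<and> {card C1, card C2} = \<tau> \<and>
        (\<forall>B\<in>P. \<forall>B'\<in>P. bm g B = bm g B' \<longrightarrow> B = B' \<or> B = C1 \<and> B' = C2 \<or> B = C2 \<and> B' = C1)"
      proof (intro exI conjI)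
        show "bm f B1 \<in> P" "bm f B2 \<in> P" using bm(1)[OF fT] 1 by auto
        show "bm f B1 \<noteq> bm f B2" using injb 1 by (auto dest: inj_onD)
        show "bm g (bm f B1) = bm g (bm f B2)" using 1(4) bmh 1(1,2) by simp
        have "card (bm f B) = card B" if "B \<in> P" for B
          using inj_bij_blocks[OF fT True injf that] injf that by (metis card_image)
        then show "{card (bm f B1), card (bm f B2)} = \<tau>" using 1 by simp
        show "\<forall>E\<in>P. \<forall>E'\<in>P. bm g E = bm g E' \<longrightarrow> E = E' \<or> E = bm f B1 \<and> E' = bm f B2 \<or> E = bm f B2 \<and> E' = bm f B1"
        proof (intro ballI impI)
          fix E E' assume E: "E \<in> P" "E' \<in> P" "bm g E = bm g E'"
          obtain B where B: "B \<in> P" "E = bm f B" using True E by blast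
          obtain B' where B': "B' \<in> P" "E' = bm f B'" using True E by blast
          have "bm ?h B = bm ?h B'" using bmh B B' E by simp
          then show "E = E' \<or> E = bm f B1 \<and> E' = bm f B2 \<or> E = bm f B2 \<and> E' = bm f B1"
            using 1(6) B B' by blast
        qed
      qed
    qed
    then show ?thesis using comp.IH(2) comp.prems(2) by blast
  next
    case False
    then have "\<not> inj_on (bm f) P" using bm_inj_iff[OF fT] by auto
    then obtain C C' where C: "C \<in> P" "C' \<in> P" "C \<noteq> C'" "bm f C = bm f C'"
      unfolding inj_on_def by blast
    then have "bm ?h C = bm ?h C'" using bmh by simp
    then have CC: "(C = B1 \<and> C' = B2) \<or> (C = B2 \<and> C' = B1)" using 1(6) C by blast
    have "f \<in> G \<tau>" unfolding G_def
    proof (intro CollectI conjI exI)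
      show "f \<in> TT" using fT .
      show "\<forall>B\<in>P. inj_on f B" using injf .
      show "B1 \<in> P" "B2 \<in> P" "B1 \<noteq> B2" "{card B1, card B2} = \<tau>" using 1 by auto
      show "bm f B1 = bm f B2" using CC C by auto
      show "\<forall>B\<in>P. \<forall>B'\<in>P. bm f B = bm f B' \<longrightarrow> B = B' \<or> B = B1 \<and> B' = B2 \<or> B = B2 \<and> B' = B1"
        using 1(6) bmh by auto
    qed
    then show ?thesis using comp.IH(1) comp.prems(2) by blast
  qed
qed

end

lemma bij_extend:
  assumes "finite V" "finite A" "card V = card A" "R \<subseteq> V" "inj_on \<theta> R" "\<theta> ` R \<subseteq> A"
  shows "\<exists>\<kappa>. bij_betw \<kappa> V A \<and> (\<forall>r\<in>R. \<kappa> r = \<theta> r)"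
proof -
  have fR: "finite R" using assms finite_subset by blast
  have cR: "card (\<theta> ` R) = card R" using assms(5) card_image by blast
  have "card (V - R) = card (A - \<theta> ` R)"
    using assms(1,2,3,4,6) cR fR by (simp add: card_Diff_subset)
  then obtain \<delta> where d: "bij_betw \<delta> (V - R) (A - \<theta> ` R)"
    using finite_same_card_bij assms(1,2) by blast
  define \<kappa> where "\<kappa> x = (if x \<in> R then \<theta> x else \<delta> x)" for x
  have b1: "bij_betw \<kappa> R (\<theta> ` R)"
  proof -
    have "bij_betw \<theta> R (\<theta> ` R)" using assms(5) by (simp add: bij_betw_def)
    moreover have "\<And>x. x \<in> R \<Longrightarrow> \<kappa> x = \<theta> x" by (simp add: \<kappa>_def)
    ultimately show ?thesis using bij_betw_cong by metis
  qed
  have b2: "bij_betw \<kappa> (V - R) (A - \<theta> ` R)"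
  proof -
    have "\<And>x. x \<in> V - R \<Longrightarrow> \<kappa> x = \<delta> x" by (simp add: \<kappa>_def)
    then show ?thesis using d bij_betw_cong by metis
  qed
  have "bij_betw \<kappa> (R \<union> (V - R)) (\<theta> ` R \<union> (A - \<theta> ` R))"
    by (rule bij_betw_combine[OF b1 b2]) blast
  moreover have "R \<union> (V - R) = V" "\<theta> ` R \<union> (A - \<theta> ` R) = A" using assms(4,6) by auto
  ultimately show ?thesis by (auto simp: \<kappa>_def)
qed

context pt begin

definition Emap :: "'a set \<Rightarrow> 'a set \<Rightarrow> ('a \<Rightarrow> 'a) \<Rightarrow> ('a \<Rightarrow> 'a)" where
  "Emap U V \<phi> = (\<lambda>x. if x \<in> X then (if x \<in> U then \<phi> x else x) else undefined)"

lemma Emap_T: assumes "U \<in> P" "V \<in> P" "\<forall>x\<in>U. \<phi> x \<in> V" shows "Emap U V \<phi> \<in> TT"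
proof (rule TI)
  show "Emap U V \<phi> x = undefined" if "x \<notin> X" for x using that by (simp add: Emap_def)
  fix B assume B: "B \<in> P"
  show "\<exists>C\<in>P. \<forall>x\<in>B. Emap U V \<phi> x \<in> C"
  proof (cases "B = U")
    case True then show ?thesis using assms blk_sub by (intro bexI[of _ V]) (auto simp: Emap_def)
  next
    case False
    then have "\<forall>x\<in>B. x \<notin> U" using disj B assms(1) by blast
    then show ?thesis using B blk_sub by (intro bexI[of _ B]) (auto simp: Emap_def)
  qed
qed

lemma Emap_bm: assumes "U \<in> P" "V \<in> P" "\<forall>x\<in>U. \<phi> x \<in> V" "B \<in> P"
  shows "bm (Emap U V \<phi>) B = (if B = U then V else B)"
proof (cases "B = U")
  case True
  have "bm (Emap U V \<phi>) B = V" using assms blk_sub True by (intro bm_eq) (auto simp: Emap_def)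
  then show ?thesis using True by simp
next
  case False
  then have "\<forall>x\<in>B. x \<notin> U" using disj assms by blast
  then have "bm (Emap U V \<phi>) B = B" using assms blk_sub by (intro bm_eq) (auto simp: Emap_def)
  then show ?thesis using False by simp
qed

lemma Emap_G: assumes "U \<in> P" "V \<in> P" "U \<noteq> V" "\<forall>x\<in>U. \<phi> x \<in> V" "inj_on \<phi> U"
  shows "Emap U V \<phi> \<in> G {card U, card V}"
  unfolding G_def
proof (intro CollectI conjI exI)
  show "Emap U V \<phi> \<in> TT" using Emap_T assms by auto
  show "\<forall>B\<in>P. inj_on (Emap U V \<phi>) B"
  proof
    fix B assume B: "B \<in> P"
    show "inj_on (Emap U V \<phi>) B"
    proof (cases "B = U")
      case True then show ?thesis using assms(5) blk_sub[OF B]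
        by (auto simp: inj_on_def Emap_def subset_iff)
    next
      case False
      then have "\<forall>x\<in>B. x \<notin> U" using disj B assms(1) by blast
      then show ?thesis using blk_sub[OF B] by (auto simp: inj_on_def Emap_def subset_iff)
    qed
  qed
  show "U \<in> P" "V \<in> P" "U \<noteq> V" "{card U, card V} = {card U, card V}" using assms by auto
  show "bm (Emap U V \<phi>) U = bm (Emap U V \<phi>) V" using Emap_bm assms by auto
  show "\<forall>B\<in>P. \<forall>B'\<in>P. bm (Emap U V \<phi>) B = bm (Emap U V \<phi>) B' \<longrightarrow> B = B' \<or> B = U \<and> B' = V \<or> B = V \<and> B' = U"
    using Emap_bm[OF assms(1,2,4)] by auto
qed

lemma swap_ex:
  assumes UP: "U \<in> P" and YP: "Y \<in> P" and cUY: "card U = card Y"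
  shows "\<exists>\<pi>. bij_betw \<pi> X X \<and> (\<forall>B\<in>P. \<pi> ` B \<in> P) \<and> \<pi> ` U = Y
     \<and> (\<forall>B\<in>P. B \<noteq> U \<longrightarrow> B \<noteq> Y \<longrightarrow> \<pi> ` B = B)"
proof (cases "U = Y")
  case True
  then show ?thesis by (intro exI[of _ id]) auto
next
  case False
  have dUY: "U \<inter> Y = {}" using disj UP YP False by blast
  obtain \<beta> where b: "bij_betw \<beta> U Y" using finite_same_card_bij blk_fin UP YP cUY by blast
  define \<pi> where "\<pi> x = (if x \<in> U then \<beta> x else if x \<in> Y then inv_into U \<beta> x else x)" for x
  have b1: "bij_betw \<pi> U Y"
  proof -
    have "\<And>x. x \<in> U \<Longrightarrow> \<pi> x = \<beta> x" by (simp add: \<pi>_def)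
    then show ?thesis using b bij_betw_cong by metis
  qed
  have b2: "bij_betw \<pi> Y U"
  proof -
    have "bij_betw (inv_into U \<beta>) Y U" by (rule bij_betw_inv_into[OF b])
    moreover have "\<And>x. x \<in> Y \<Longrightarrow> \<pi> x = inv_into U \<beta> x" using dUY by (auto simp: \<pi>_def)
    ultimately show ?thesis using bij_betw_cong by metis
  qed
  have b3: "bij_betw \<pi> (X - (U \<union> Y)) (X - (U \<union> Y))"
  proof -
    have "\<And>x. x \<in> X - (U \<union> Y) \<Longrightarrow> \<pi> x = id x" by (simp add: \<pi>_def)
    moreover have "bij_betw id (X - (U \<union> Y)) (X - (U \<union> Y))" by simp
    ultimately show ?thesis using bij_betw_cong by metis
  qed
  have d12: "Y \<inter> U = {}" using dUY by blast
  have b12: "bij_betw \<pi> (U \<union> Y) (Y \<union> U)" using bij_betw_combine[OF b1 b2 d12] .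
  have d3: "(Y \<union> U) \<inter> (X - (U \<union> Y)) = {}" by blast
  have "bij_betw \<pi> (U \<union> Y \<union> (X - (U \<union> Y))) (Y \<union> U \<union> (X - (U \<union> Y)))"
    using bij_betw_combine[OF b12 b3 d3] .
  moreover have "U \<union> Y \<union> (X - (U \<union> Y)) = X" "Y \<union> U \<union> (X - (U \<union> Y)) = X"
    using blk_sub[OF UP] blk_sub[OF YP] by auto
  ultimately have bX: "bij_betw \<pi> X X" by simp
  have fixB: "\<pi> ` B = B" if B: "B \<in> P" "B \<noteq> U" "B \<noteq> Y" for B
  proof -
    have "\<forall>x\<in>B. x \<notin> U \<and> x \<notin> Y" using disj B UP YP by blast
    then show "\<pi> ` B = B" by (auto simp: \<pi>_def image_def)
  qed
  have imU: "\<pi> ` U = Y" using b1 by (simp add: bij_betw_def)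
  have imY: "\<pi> ` Y = U" using b2 by (simp add: bij_betw_def)
  have "\<pi> ` B \<in> P" if B: "B \<in> P" for B
    using fixB[OF B] imU imY UP YP B by (cases "B = U"; cases "B = Y") auto
  then show ?thesis using bX imU fixB by blast
qed

lemma pi_ex:
  assumes "U \<in> P" "V \<in> P" "U \<noteq> V" "Y1 \<in> P" "Y2 \<in> P" "Y1 \<noteq> Y2"
    "card U = card Y1" "card V = card Y2"
  shows "\<exists>\<pi>. bij_betw \<pi> X X \<and> (\<forall>B\<in>P. \<pi> ` B \<in> P) \<and> \<pi> ` U = Y1 \<and> \<pi> ` V = Y2"
proof -
  obtain \<pi>1 where p1: "bij_betw \<pi>1 X X" "\<forall>B\<in>P. \<pi>1 ` B \<in> P" "\<pi>1 ` U = Y1"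
    using swap_ex[OF assms(1,4,7)] by blast
  have V'P: "\<pi>1 ` V \<in> P" using p1(2) assms(2) by blast
  have inj1: "inj_on \<pi>1 X" using p1(1) by (simp add: bij_betw_def)
  have cV': "card (\<pi>1 ` V) = card Y2"
  proof -
    have "inj_on \<pi>1 V" using inj_on_subset[OF inj1 blk_sub[OF assms(2)]] .
    then show ?thesis using assms(8) by (simp add: card_image)
  qed
  obtain \<pi>2 where p2: "bij_betw \<pi>2 X X" "\<forall>B\<in>P. \<pi>2 ` B \<in> P" "\<pi>2 ` (\<pi>1 ` V) = Y2"
    "\<forall>B\<in>P. B \<noteq> \<pi>1 ` V \<longrightarrow> B \<noteq> Y2 \<longrightarrow> \<pi>2 ` B = B"
    using swap_ex[OF V'P assms(5) cV'] by blast
  have "\<pi>1 ` V \<noteq> Y1"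
  proof
    assume "\<pi>1 ` V = Y1"
    then have "\<pi>1 ` V = \<pi>1 ` U" using p1(3) by simp
    then have "V = U" using inj_on_image_eq_iff[OF inj1 blk_sub[OF assms(2)] blk_sub[OF assms(1)]] by simp
    then show False using assms(3) by simp
  qed
  then have Y1fix: "\<pi>2 ` Y1 = Y1" using p2(4) assms(4,6) by blast
  show ?thesis
  proof (intro exI conjI)
    show "bij_betw (\<pi>2 \<circ> \<pi>1) X X" by (rule bij_betw_trans[OF p1(1) p2(1)])
    show "\<forall>B\<in>P. (\<pi>2 \<circ> \<pi>1) ` B \<in> P"
    proof
      fix B assume "B \<in> P"
      then have "\<pi>1 ` B \<in> P" using p1(2) by blast
      then have "\<pi>2 ` (\<pi>1 ` B) \<in> P" using p2(2) by blast
      then show "(\<pi>2 \<circ> \<pi>1) ` B \<in> P" by (simp only: image_comp)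
    qed
    have "\<pi>2 ` (\<pi>1 ` U) = Y1" using p1(3) Y1fix by simp
    then show "(\<pi>2 \<circ> \<pi>1) ` U = Y1" by (simp only: image_comp)
    show "(\<pi>2 \<circ> \<pi>1) ` V = Y2" using p2(3) by (simp only: image_comp)
  qed
qed

end

context pt begin

lemma pi_surj_blk:
  assumes bij: "bij_betw \<pi> X X" and pb: "\<forall>B\<in>P. \<pi> ` B \<in> P" and E: "E \<in> P"
  shows "\<exists>B\<in>P. \<pi> ` B = E"
proof -
  obtain y where y: "y \<in> E" using blk_ne[OF E] by blast
  have yX: "y \<in> X" using y blk_sub[OF E] by blast
  have "y \<in> \<pi> ` X" using bij yX by (simp add: bij_betw_def)
  then obtain x where x: "x \<in> X" "\<pi> x = y" by blast
  obtain B where B: "B \<in> P" "x \<in> B" using ex_blk[OF x(1)] by blast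
  have "\<pi> ` B \<in> P" using pb B(1) by blast
  moreover have "y \<in> \<pi> ` B" using x B by blast
  ultimately have "\<pi> ` B = E" using disj E y by blast
  then show ?thesis using B by blast
qed

lemma core_lem:
  assumes UP: "U \<in> P" and VP: "V \<in> P" and A1P: "A1 \<in> P" and A2P: "A2 \<in> P"
    and UV: "U \<noteq> V" and A12: "A1 \<noteq> A2"
    and iotaA: "\<forall>y\<in>A2. \<iota> y \<in> A1" and phiV: "\<forall>x\<in>U. \<phi> x \<in> V"
    and alphaA: "\<forall>x\<in>U. \<alpha> x \<in> A2" and kappaA: "\<forall>v\<in>V. \<kappa> v \<in> A1" and lamV: "\<forall>y\<in>A1. lm y \<in> V"
    and lk: "\<forall>v\<in>V. lm (\<kappa> v) = v" and la: "\<forall>x\<in>U. lm (\<iota> (\<alpha> x)) = \<phi> x"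
    and bij: "bij_betw \<pi> X X" and pb: "\<forall>B\<in>P. \<pi> ` B \<in> P"
    and piUV: "(\<pi> ` U = A1 \<and> \<pi> ` V = A2) \<or> (\<pi> ` U = A2 \<and> \<pi> ` V = A1)"
  shows "\<exists>s t. s \<in> SS \<and> t \<in> SS \<and> Emap U V \<phi> = compose X t (compose X (Emap A2 A1 \<iota>) s)"
proof -
  obtain u0 where u0: "u0 \<in> U" using blk_ne[OF UP] by blast
  obtain v0 where v0: "v0 \<in> V" using blk_ne[OF VP] by blast
  have injX: "inj_on \<pi> X" using bij by (simp add: bij_betw_def)
  have oth: "\<pi> ` B \<noteq> A1 \<and> \<pi> ` B \<noteq> A2" if B: "B \<in> P" "B \<noteq> U" "B \<noteq> V" for B
  proof -
    have "\<pi> ` B \<noteq> \<pi> ` U" "\<pi> ` B \<noteq> \<pi> ` V"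
      using inj_on_image_eq_iff[OF injX blk_sub[OF B(1)] blk_sub[OF UP]]
        inj_on_image_eq_iff[OF injX blk_sub[OF B(1)] blk_sub[OF VP]] B by auto
    then show ?thesis using piUV by auto
  qed
  have dA: "A1 \<inter> A2 = {}" using disj A1P A2P A12 by blast
  have dUV: "U \<inter> V = {}" using disj UP VP UV by blast
  have notA: "\<pi> x \<notin> A1 \<and> \<pi> x \<notin> A2" if B: "B \<in> P" "B \<noteq> U" "B \<noteq> V" "x \<in> B" for B x
  proof -
    have "\<pi> ` B \<in> P" using pb B(1) by blast
    moreover have "\<pi> x \<in> \<pi> ` B" using B(4) by blast
    ultimately show ?thesis using oth[OF B(1-3)] disj A1P A2P by blast
  qed
  define s where "s x = (if x \<in> X then (if x \<in> U then \<alpha> x else if x \<in> V then \<kappa> x else \<pi> x) else undefined)" for x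
  define t where "t y = (if y \<in> X then (if y \<in> A1 then lm y else if y \<in> A2 then u0 else inv_into X \<pi> y) else undefined)" for y
  have sT: "s \<in> TT"
  proof (rule TI)
    show "s x = undefined" if "x \<notin> X" for x using that by (simp add: s_def)
    fix B assume B: "B \<in> P"
    consider "B = U" | "B = V" | "B \<noteq> U \<and> B \<noteq> V" by blast
    then show "\<exists>C\<in>P. \<forall>x\<in>B. s x \<in> C"
    proof cases
      case 1 then show ?thesis using alphaA blk_sub[OF UP] A2P by (auto simp: s_def)
    next
      case 2 then show ?thesis using kappaA blk_sub[OF VP] A1P dUV by (auto simp: s_def)
    next
      case 3
      then have "\<forall>x\<in>B. x \<notin> U \<and> x \<notin> V" using disj B UP VP by blast
      then have "\<forall>x\<in>B. s x \<in> \<pi> ` B" using blk_sub[OF B] by (auto simp: s_def)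
      then show ?thesis using pb B by blast
    qed
  qed
  have sS: "s \<in> SS"
  proof (rule SI[OF sT])
    fix E assume E: "E \<in> P"
    consider "E = A2" | "E = A1" | "E \<noteq> A1 \<and> E \<noteq> A2" by blast
    then show "\<exists>x\<in>X. s x \<in> E"
    proof cases
      case 1 then show ?thesis using u0 alphaA blk_sub[OF UP] by (intro bexI[of _ u0]) (auto simp: s_def)
    next
      case 2 then show ?thesis using v0 kappaA blk_sub[OF VP] dUV by (intro bexI[of _ v0]) (auto simp: s_def)
    next
      case 3
      obtain B where B: "B \<in> P" "\<pi> ` B = E" using pi_surj_blk[OF bij pb E] by blast
      have BUV: "B \<noteq> U" "B \<noteq> V" using B piUV 3 by auto
      obtain x where x: "x \<in> B" using blk_ne[OF B(1)] by blast
      have "x \<notin> U" "x \<notin> V" using disj B(1) UP VP x BUV by blast+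
      moreover have "x \<in> X" using x blk_sub[OF B(1)] by blast
      ultimately show ?thesis using x B by (intro bexI[of _ x]) (auto simp: s_def)
    qed
  qed
  have tT: "t \<in> TT"
  proof (rule TI)
    show "t x = undefined" if "x \<notin> X" for x using that by (simp add: t_def)
    fix E assume E: "E \<in> P"
    consider "E = A1" | "E = A2" | "E \<noteq> A1 \<and> E \<noteq> A2" by blast
    then show "\<exists>C\<in>P. \<forall>x\<in>E. t x \<in> C"
    proof cases
      case 1 then show ?thesis using lamV blk_sub[OF A1P] VP by (auto simp: t_def)
    next
      case 2 then show ?thesis using u0 blk_sub[OF A2P] UP dA by (auto simp: t_def)
    next
      case 3
      obtain B where B: "B \<in> P" "\<pi> ` B = E" using pi_surj_blk[OF bij pb E] by blast
      have "\<forall>y\<in>E. t y \<in> B"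
      proof
        fix y assume y: "y \<in> E"
        then obtain x where x: "x \<in> B" "y = \<pi> x" using B by blast
        have xX: "x \<in> X" using x blk_sub[OF B(1)] by blast
        have "y \<notin> A1" "y \<notin> A2" using disj E A1P A2P y 3 by blast+
        moreover have "y \<in> X" using y blk_sub[OF E] by blast
        ultimately have "t y = inv_into X \<pi> y" by (simp add: t_def)
        also have "\<dots> = x" using x(2) inv_into_f_f[OF injX xX] by simp
        finally show "t y \<in> B" using x by simp
      qed
      then show ?thesis using B by blast
    qed
  qed
  have tS: "t \<in> SS"
  proof (rule SI[OF tT])
    fix E assume E: "E \<in> P"
    consider "E = V" | "E = U" | "E \<noteq> U \<and> E \<noteq> V" by blast
    then show "\<exists>x\<in>X. t x \<in> E"
    proof cases
      case 1
      obtain y where y: "y \<in> A1" using blk_ne[OF A1P] by blast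
      then show ?thesis using lamV blk_sub[OF A1P] 1 by (intro bexI[of _ y]) (auto simp: t_def)
    next
      case 2
      obtain y where y: "y \<in> A2" using blk_ne[OF A2P] by blast
      then show ?thesis using u0 blk_sub[OF A2P] 2 dA by (intro bexI[of _ y]) (auto simp: t_def)
    next
      case 3
      obtain x where x: "x \<in> E" using blk_ne[OF E] by blast
      have xX: "x \<in> X" using x blk_sub[OF E] by blast
      have "\<pi> x \<notin> A1 \<and> \<pi> x \<notin> A2" using notA[OF E _ _ x] 3 by blast
      moreover have "\<pi> x \<in> X" using bij xX by (auto simp: bij_betw_def)
      ultimately have "t (\<pi> x) = x" using inv_into_f_f[OF injX xX] by (simp add: t_def)
      then show ?thesis using x \<open>\<pi> x \<in> X\<close> by (intro bexI[of _ "\<pi> x"]) auto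
    qed
  qed
  have eq: "Emap U V \<phi> = compose X t (compose X (Emap A2 A1 \<iota>) s)"
  proof
    fix z
    show "Emap U V \<phi> z = compose X t (compose X (Emap A2 A1 \<iota>) s) z"
    proof (cases "z \<in> X")
      case False then show ?thesis by (simp add: Emap_def compose_def)
    next
      case zX: True
      obtain B where B: "B \<in> P" "z \<in> B" using ex_blk[OF zX] by blast
      consider "B = U" | "B = V" | "B \<noteq> U \<and> B \<noteq> V" by blast
      then show ?thesis
      proof cases
        case 1
        then have zU: "z \<in> U" using B by simp
        have a2: "\<alpha> z \<in> A2" "\<alpha> z \<in> X" using alphaA zU blk_sub[OF A2P] by auto
        have a1: "\<iota> (\<alpha> z) \<in> A1" "\<iota> (\<alpha> z) \<in> X" using iotaA a2 blk_sub[OF A1P] by auto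
        have "compose X (Emap A2 A1 \<iota>) s z = \<iota> (\<alpha> z)"
          using zX zU a2 by (simp add: compose_def s_def Emap_def)
        then have "compose X t (compose X (Emap A2 A1 \<iota>) s) z = lm (\<iota> (\<alpha> z))"
          using zX a1 by (simp add: compose_def t_def)
        then show ?thesis using la zU zX by (simp add: Emap_def)
      next
        case 2
        then have zV: "z \<in> V" "z \<notin> U" using B dUV by auto
        have k: "\<kappa> z \<in> A1" "\<kappa> z \<in> X" "\<kappa> z \<notin> A2" using kappaA zV blk_sub[OF A1P] dA by auto
        have "compose X (Emap A2 A1 \<iota>) s z = \<kappa> z"
          using zX zV k by (simp add: compose_def s_def Emap_def)
        then have "compose X t (compose X (Emap A2 A1 \<iota>) s) z = lm (\<kappa> z)"
          using zX k by (simp add: compose_def t_def)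
        then show ?thesis using lk zV zX by (simp add: Emap_def)
      next
        case 3
        have zUV: "z \<notin> U" "z \<notin> V" using disj B UP VP 3 by blast+
        have pz: "\<pi> z \<notin> A1" "\<pi> z \<notin> A2" using notA[OF B(1) _ _ B(2)] 3 by blast+
        have pzX: "\<pi> z \<in> X" using bij zX by (auto simp: bij_betw_def)
        have "compose X (Emap A2 A1 \<iota>) s z = \<pi> z"
          using zX zUV pz pzX by (simp add: compose_def s_def Emap_def)
        then have "compose X t (compose X (Emap A2 A1 \<iota>) s) z = inv_into X \<pi> (\<pi> z)"
          using zX pz pzX by (simp add: compose_def t_def)
        then show ?thesis using inv_into_f_f[OF injX zX] zUV zX by (simp add: Emap_def)
      qed
    qed
  qed
  show ?thesis using sS tS eq by blast
qed

end

context pt begin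

definition Ty :: "nat set set" where
  "Ty = {{card B1, card B2} | B1 B2. B1 \<in> P \<and> B2 \<in> P \<and> B1 \<noteq> B2}"

definition good :: "nat set \<Rightarrow> 'a set \<times> 'a set \<times> ('a \<Rightarrow> 'a) \<Rightarrow> bool" where
  "good \<tau> D = (case D of (A2, A1, \<iota>) \<Rightarrow> A1 \<in> P \<and> A2 \<in> P \<and> A1 \<noteq> A2 \<and> card A2 \<le> card A1
     \<and> {card A1, card A2} = \<tau> \<and> (\<forall>y\<in>A2. \<iota> y \<in> A1) \<and> inj_on \<iota> A2)"

lemma ex_good: assumes "\<tau> \<in> Ty" shows "\<exists>D. good \<tau> D"
proof -
  obtain B1 B2 where B: "B1 \<in> P" "B2 \<in> P" "B1 \<noteq> B2" "\<tau> = {card B1, card B2}"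
    using assms unfolding Ty_def by blast
  show ?thesis
  proof (cases "card B2 \<le> card B1")
    case True
    obtain \<iota> where i: "\<iota> ` B2 \<subseteq> B1" "inj_on \<iota> B2"
      using card_le_inj[OF blk_fin[OF B(2)] blk_fin[OF B(1)] True] by blast
    have "good \<tau> (B2, B1, \<iota>)" using B True i unfolding good_def by auto
    then show ?thesis by blast
  next
    case False
    then have le: "card B1 \<le> card B2" by simp
    obtain \<iota> where i: "\<iota> ` B1 \<subseteq> B2" "inj_on \<iota> B1"
      using card_le_inj[OF blk_fin[OF B(1)] blk_fin[OF B(2)] le] by blast
    have "good \<tau> (B1, B2, \<iota>)" using B le i unfolding good_def by auto
    then show ?thesis by blast
  qed
qed

definition wt :: "nat set \<Rightarrow> ('a \<Rightarrow> 'a)" where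
  "wt \<tau> = (case (SOME D. good \<tau> D) of (A2, A1, \<iota>) \<Rightarrow> Emap A2 A1 \<iota>)"

lemma wt_good: assumes "\<tau> \<in> Ty"
  obtains A2 A1 \<iota> where "good \<tau> (A2, A1, \<iota>)" "wt \<tau> = Emap A2 A1 \<iota>"
proof -
  have gs: "good \<tau> (SOME D. good \<tau> D)" using ex_good[OF assms] by (rule someI_ex)
  obtain A2 A1 \<iota> where e: "(SOME D. good \<tau> D) = (A2, A1, \<iota>)" by (metis prod_cases3)
  have "good \<tau> (A2, A1, \<iota>)" using gs e by simp
  moreover have "wt \<tau> = Emap A2 A1 \<iota>" unfolding wt_def e by simp
  ultimately show ?thesis using that by blast
qed

definition W0 :: "('a \<Rightarrow> 'a) set" where "W0 = wt ` Ty"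

lemma wt_G: assumes "\<tau> \<in> Ty" shows "wt \<tau> \<in> G \<tau>"
proof -
  obtain A2 A1 \<iota> where g: "good \<tau> (A2, A1, \<iota>)" "wt \<tau> = Emap A2 A1 \<iota>" using wt_good[OF assms] .
  then have "Emap A2 A1 \<iota> \<in> G {card A2, card A1}" using Emap_G unfolding good_def by auto
  moreover have "{card A2, card A1} = \<tau>" using g unfolding good_def by auto
  ultimately show ?thesis using g by simp
qed

lemma W0_T: "W0 \<subseteq> TT" using wt_G unfolding W0_def G_def by auto

abbreviation "S0 \<equiv> sgen X (SS \<union> W0)"

lemma E_in:
  assumes UP: "U \<in> P" and VP: "V \<in> P" and UV: "U \<noteq> V" and phiV: "\<forall>x\<in>U. \<phi> x \<in> V"
  shows "Emap U V \<phi> \<in> S0"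
proof -
  have tT: "{card U, card V} \<in> Ty" unfolding Ty_def using UP VP UV by blast
  obtain A2 A1 \<iota> where g: "good {card U, card V} (A2, A1, \<iota>)" "wt {card U, card V} = Emap A2 A1 \<iota>"
    using wt_good[OF tT] .
  have A1P: "A1 \<in> P" and A2P: "A2 \<in> P" and A12: "A1 \<noteq> A2" and iotaA: "\<forall>y\<in>A2. \<iota> y \<in> A1"
    and inji: "inj_on \<iota> A2" and cc: "{card A1, card A2} = {card U, card V}"
    using g(1) unfolding good_def by auto
  have wW: "Emap A2 A1 \<iota> \<in> W0" using g(2) tT unfolding W0_def by (metis image_eqI)
  obtain v0 where v0: "v0 \<in> V" using blk_ne[OF VP] by blast
  have "\<exists>\<alpha> \<kappa> lm \<pi>. (\<forall>x\<in>U. \<alpha> x \<in> A2) \<and> (\<forall>v\<in>V. \<kappa> v \<in> A1) \<and> (\<forall>y\<in>A1. lm y \<in> V)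
    \<and> (\<forall>v\<in>V. lm (\<kappa> v) = v) \<and> (\<forall>x\<in>U. lm (\<iota> (\<alpha> x)) = \<phi> x)
    \<and> bij_betw \<pi> X X \<and> (\<forall>B\<in>P. \<pi> ` B \<in> P)
    \<and> ((\<pi> ` U = A1 \<and> \<pi> ` V = A2) \<or> (\<pi> ` U = A2 \<and> \<pi> ` V = A1))"
  proof (cases "card A1 = card U \<and> card A2 = card V")
    case True
    obtain \<pi> where p: "bij_betw \<pi> X X" "\<forall>B\<in>P. \<pi> ` B \<in> P" "\<pi> ` U = A1" "\<pi> ` V = A2"
      using pi_ex[OF UP VP UV A1P A2P A12] True by auto
    obtain \<gamma> where ga: "bij_betw \<gamma> V A2"
      using finite_same_card_bij[OF blk_fin[OF VP] blk_fin[OF A2P]] True by auto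
    define \<kappa> where "\<kappa> = \<iota> \<circ> \<gamma>"
    define \<alpha> where "\<alpha> = \<gamma> \<circ> \<phi>"
    define lm where "lm y = (if y \<in> \<kappa> ` V then inv_into V \<kappa> y else v0)" for y
    have injk: "inj_on \<kappa> V" unfolding \<kappa>_def
      using ga inji by (simp add: bij_betw_def comp_inj_on)
    have gaV: "\<forall>v\<in>V. \<gamma> v \<in> A2" using ga by (auto simp: bij_betw_def)
    show ?thesis
    proof (intro exI conjI)
      show "\<forall>x\<in>U. \<alpha> x \<in> A2" using gaV phiV by (simp add: \<alpha>_def)
      show "\<forall>v\<in>V. \<kappa> v \<in> A1" using gaV iotaA by (simp add: \<kappa>_def)
      show "\<forall>y\<in>A1. lm y \<in> V" using v0 by (simp add: lm_def inv_into_into)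
      show "\<forall>v\<in>V. lm (\<kappa> v) = v" using injk by (simp add: lm_def)
      show "\<forall>x\<in>U. lm (\<iota> (\<alpha> x)) = \<phi> x"
      proof
        fix x assume "x \<in> U"
        then have fx: "\<phi> x \<in> V" using phiV by blast
        have "\<iota> (\<alpha> x) = \<kappa> (\<phi> x)" by (simp add: \<alpha>_def \<kappa>_def)
        then show "lm (\<iota> (\<alpha> x)) = \<phi> x" using fx injk by (simp add: lm_def)
      qed
    qed (use p in auto)
  next
    case False
    then have cs: "card A2 = card U" "card A1 = card V" using cc by (auto simp: doubleton_eq_iff)
    obtain \<pi> where p: "bij_betw \<pi> X X" "\<forall>B\<in>P. \<pi> ` B \<in> P" "\<pi> ` U = A2" "\<pi> ` V = A1"
      using pi_ex[OF UP VP UV A2P A1P A12[symmetric]] cs by auto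
    obtain \<gamma> where ga: "bij_betw \<gamma> U A2"
      using finite_same_card_bij[OF blk_fin[OF UP] blk_fin[OF A2P]] cs by auto
    define R where "R = \<phi> ` U"
    define \<rho> where "\<rho> = inv_into U \<phi>"
    define \<theta> where "\<theta> = \<iota> \<circ> \<gamma> \<circ> \<rho>"
    have RV: "R \<subseteq> V" using phiV by (auto simp: R_def)
    have injr: "inj_on \<rho> R" unfolding \<rho>_def R_def by (rule inj_on_inv_into) simp
    have rU: "\<rho> ` R \<subseteq> U" unfolding \<rho>_def R_def by (auto intro: inv_into_into)
    have injg: "inj_on \<gamma> U" and gU: "\<gamma> ` U = A2" using ga by (auto simp: bij_betw_def)
    have injt: "inj_on \<theta> R"
    proof -
      have "inj_on (\<gamma> \<circ> \<rho>) R" using injr inj_on_subset[OF injg rU] by (rule comp_inj_on)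
      moreover have "(\<gamma> \<circ> \<rho>) ` R \<subseteq> A2" using rU gU by (auto simp: image_comp[symmetric])
      ultimately show ?thesis unfolding \<theta>_def using inj_on_subset[OF inji]
        by (metis comp_assoc comp_inj_on)
    qed
    have tA: "\<theta> ` R \<subseteq> A1"
    proof
      fix y assume "y \<in> \<theta> ` R"
      then obtain r where r: "r \<in> R" "y = \<theta> r" by blast
      have "\<rho> r \<in> U" using rU r by blast
      then have "\<gamma> (\<rho> r) \<in> A2" using gU by blast
      then show "y \<in> A1" using iotaA r by (simp add: \<theta>_def)
    qed
    obtain \<kappa> where k: "bij_betw \<kappa> V A1" "\<forall>r\<in>R. \<kappa> r = \<theta> r"
      using bij_extend[OF blk_fin[OF VP] blk_fin[OF A1P] cs(2)[symmetric] RV injt tA] by blast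
    have injk: "inj_on \<kappa> V" and kV: "\<kappa> ` V = A1" using k(1) by (auto simp: bij_betw_def)
    define \<alpha> where "\<alpha> x = \<gamma> (\<rho> (\<phi> x))" for x
    define lm where "lm = inv_into V \<kappa>"
    show ?thesis
    proof (intro exI conjI)
      show "\<forall>x\<in>U. \<alpha> x \<in> A2"
      proof
        fix x assume "x \<in> U"
        then have "\<phi> x \<in> R" by (simp add: R_def)
        then have "\<rho> (\<phi> x) \<in> U" using rU by blast
        then show "\<alpha> x \<in> A2" using gU by (auto simp: \<alpha>_def)
      qed
      show "\<forall>v\<in>V. \<kappa> v \<in> A1" using kV by blast
      show "\<forall>y\<in>A1. lm y \<in> V" using kV by (auto simp: lm_def inv_into_into)
      show "\<forall>v\<in>V. lm (\<kappa> v) = v" using injk by (simp add: lm_def)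
      show "\<forall>x\<in>U. lm (\<iota> (\<alpha> x)) = \<phi> x"
      proof
        fix x assume xU: "x \<in> U"
        then have R: "\<phi> x \<in> R" by (simp add: R_def)
        have "\<iota> (\<alpha> x) = \<theta> (\<phi> x)" by (simp add: \<alpha>_def \<theta>_def)
        also have "\<dots> = \<kappa> (\<phi> x)" using k(2) R by simp
        moreover have "\<phi> x \<in> V" using RV R by blast
        ultimately show "lm (\<iota> (\<alpha> x)) = \<phi> x" by (simp add: lm_def inv_into_f_f[OF injk])
      qed
    qed (use p in auto)
  qed
  then obtain \<alpha> \<kappa> lm \<pi> where h: "\<forall>x\<in>U. \<alpha> x \<in> A2" "\<forall>v\<in>V. \<kappa> v \<in> A1" "\<forall>y\<in>A1. lm y \<in> V"
    "\<forall>v\<in>V. lm (\<kappa> v) = v" "\<forall>x\<in>U. lm (\<iota> (\<alpha> x)) = \<phi> x"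
    "bij_betw \<pi> X X" "\<forall>B\<in>P. \<pi> ` B \<in> P"
    "(\<pi> ` U = A1 \<and> \<pi> ` V = A2) \<or> (\<pi> ` U = A2 \<and> \<pi> ` V = A1)" by blast
  obtain s t where st: "s \<in> SS" "t \<in> SS" "Emap U V \<phi> = compose X t (compose X (Emap A2 A1 \<iota>) s)"
    using core_lem[OF UP VP A1P A2P UV A12 iotaA phiV h] by blast
  have "s \<in> S0" "t \<in> S0" "Emap A2 A1 \<iota> \<in> S0" using st wW by (auto intro: sgen.base)
  then show ?thesis using st(3) by (metis sgen.comp)
qed

end

lemma funpow_in: "b ` P \<subseteq> P \<Longrightarrow> B \<in> P \<Longrightarrow> (b ^^ n) B \<in> P"
  by (induction n) auto

lemma funpow_mult_fix: "(b ^^ j) B = B \<Longrightarrow> (b ^^ (j * k)) B = B"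
proof (induction k)
  case 0 then show ?case by simp
next
  case (Suc k)
  have "(b ^^ (j * Suc k)) B = (b ^^ j) ((b ^^ (j * k)) B)"
    by (simp add: funpow_add mult.commute)
  then show ?case using Suc by simp
qed

definition cyc :: "('b \<Rightarrow> 'b) \<Rightarrow> 'b set \<Rightarrow> 'b set" where
  "cyc b P = {B \<in> P. \<exists>j>0. (b ^^ j) B = B}"

lemma cyc_sub: "cyc b P \<subseteq> P" by (auto simp: cyc_def)

lemma cyc_step: assumes "b ` P \<subseteq> P" "B \<in> cyc b P" shows "b B \<in> cyc b P"
proof -
  obtain j where j: "j > 0" "(b ^^ j) B = B" "B \<in> P" using assms(2) by (auto simp: cyc_def)
  have "(b ^^ j) (b B) = b ((b ^^ j) B)" by (simp add: funpow_swap1)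
  then have "(b ^^ j) (b B) = b B" using j by simp
  then show ?thesis using j assms(1) by (auto simp: cyc_def)
qed

lemma cyc_inj: "inj_on b (cyc b P)"
proof
  fix B B' assume B: "B \<in> cyc b P" and B': "B' \<in> cyc b P" and eq: "b B = b B'"
  obtain j where j: "j > 0" "(b ^^ j) B = B" using B by (auto simp: cyc_def)
  obtain k where k: "k > 0" "(b ^^ k) B' = B'" using B' by (auto simp: cyc_def)
  define J where "J = j * k"
  have J0: "J > 0" using j k by (simp add: J_def)
  have 1: "(b ^^ J) B = B" using funpow_mult_fix[OF j(2)] by (simp add: J_def)
  have 2: "(b ^^ J) B' = B'" using funpow_mult_fix[OF k(2), of j] by (simp add: J_def mult.commute)
  obtain J' where J': "J = Suc J'" using J0 by (cases J) auto
  have 3: "(b ^^ J) B = (b ^^ J') (b B)" unfolding J' by (simp only: funpow_Suc_right comp_apply)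
  have 4: "(b ^^ J) B' = (b ^^ J') (b B')" unfolding J' by (simp only: funpow_Suc_right comp_apply)
  have "B = (b ^^ J) B" using 1 by (rule sym)
  also have "\<dots> = (b ^^ J') (b B)" by (rule 3)
  also have "\<dots> = (b ^^ J') (b B')" by (simp only: eq)
  also have "\<dots> = (b ^^ J) B'" by (rule 4[symmetric])
  also have "\<dots> = B'" by (rule 2)
  finally show "B = B'" .
qed

lemma cyc_surj: assumes "finite P" "b ` P \<subseteq> P" shows "b ` cyc b P = cyc b P"
proof -
  have s: "b ` cyc b P \<subseteq> cyc b P" using cyc_step[OF assms(2)] by auto
  have f: "finite (cyc b P)" by (rule finite_subset[OF cyc_sub assms(1)])
  show ?thesis by (rule endo_inj_surj[OF f s cyc_inj])
qed

lemma cyc_reach: assumes fin: "finite P" and bP: "b ` P \<subseteq> P" and B0: "B0 \<in> P"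
  shows "\<exists>n. (b ^^ n) B0 \<in> cyc b P"
proof -
  have "\<not> inj_on (\<lambda>i. (b ^^ i) B0) {0..card P}"
  proof
    assume inj: "inj_on (\<lambda>i. (b ^^ i) B0) {0..card P}"
    have "(\<lambda>i. (b ^^ i) B0) ` {0..card P} \<subseteq> P" using funpow_in[OF bP B0] by blast
    then have "card ((\<lambda>i. (b ^^ i) B0) ` {0..card P}) \<le> card P" using fin card_mono by blast
    moreover have "card ((\<lambda>i. (b ^^ i) B0) ` {0..card P}) = Suc (card P)"
      using card_image[OF inj] by simp
    ultimately show False by simp
  qed
  then obtain i j where ij: "i \<noteq> j" "(b ^^ i) B0 = (b ^^ j) B0"
    unfolding inj_on_def by blast
  obtain i' j' where ij': "i' < j'" "(b ^^ i') B0 = (b ^^ j') B0"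
  proof (cases "i < j")
    case True then show ?thesis using that ij by blast
  next
    case False then show ?thesis using that[of j i] ij by simp
  qed
  have e1: "(b ^^ (j' - i')) ((b ^^ i') B0) = (b ^^ j') B0"
  proof -
    have jj: "(j' - i') + i' = j'" using ij'(1) by simp
    have "(b ^^ (j' - i')) ((b ^^ i') B0) = (b ^^ ((j' - i') + i')) B0"
      by (simp only: funpow_add comp_apply)
    also have "\<dots> = (b ^^ j') B0" by (simp only: jj)
    finally show ?thesis .
  qed
  have e2: "(b ^^ (j' - i')) ((b ^^ i') B0) = (b ^^ i') B0" using e1 ij'(2)[symmetric] by (rule trans)
  have "j' - i' > 0" using ij'(1) by simp
  then have "\<exists>j>0. (b ^^ j) ((b ^^ i') B0) = (b ^^ i') B0" using e2 by blast
  then have "(b ^^ i') B0 \<in> cyc b P" using funpow_in[OF bP B0] unfolding cyc_def by blast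
  then show ?thesis by blast
qed

lemma cyc_entry: assumes fin: "finite P" and bP: "b ` P \<subseteq> P" and ns: "b ` P \<noteq> P"
  shows "\<exists>B2\<in>P. B2 \<notin> cyc b P \<and> b B2 \<in> cyc b P"
proof -
  have "cyc b P \<noteq> P"
  proof
    assume "cyc b P = P"
    then have "b ` P = P" using cyc_surj[OF fin bP] by simp
    then show False using ns by simp
  qed
  then obtain B0 where B0: "B0 \<in> P" "B0 \<notin> cyc b P" using cyc_sub[of b P] by blast
  define n where "n = (LEAST n. (b ^^ n) B0 \<in> cyc b P)"
  have n: "(b ^^ n) B0 \<in> cyc b P" unfolding n_def using cyc_reach[OF fin bP B0(1)] by (rule LeastI_ex)
  have n0: "n \<noteq> 0"
  proof
    assume "n = 0"
    then have "(b ^^ n) B0 = B0" by simp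
    then show False using n B0(2) by simp
  qed
  then obtain m where m: "n = Suc m" by (cases n) auto
  have mlt: "m < n" using m by simp
  have "\<not> (b ^^ m) B0 \<in> cyc b P" using not_less_Least[OF mlt[unfolded n_def]] .
  moreover have "b ((b ^^ m) B0) \<in> cyc b P"
  proof -
    have "(b ^^ n) B0 = b ((b ^^ m) B0)" unfolding m by simp
    then show ?thesis using n by simp
  qed
  moreover have "(b ^^ m) B0 \<in> P" using funpow_in[OF bP B0(1)] .
  ultimately show ?thesis by blast
qed

context pt begin

lemma decomp:
  assumes fT: "f \<in> TT" and ns: "bm f ` P \<noteq> P"
  shows "\<exists>\<sigma> e g. \<sigma> \<in> SS \<and> e \<in> S0 \<and> g \<in> TT \<and> card (bm f ` P) < card (bm g ` P)
     \<and> f = compose X g (compose X e \<sigma>)"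
proof -
  define b where "b = bm f"
  have bP: "b ` P \<subseteq> P" using bm(1)[OF fT] by (auto simp: b_def)
  have bpt: "\<And>B x. B \<in> P \<Longrightarrow> x \<in> B \<Longrightarrow> f x \<in> b B" using bm_pt[OF fT] by (simp add: b_def)
  define Cy where "Cy = cyc b P"
  have CyP: "Cy \<subseteq> P" unfolding Cy_def by (rule cyc_sub)
  have Cys: "b ` Cy = Cy" unfolding Cy_def by (rule cyc_surj[OF finP bP])
  obtain B2 where B2: "B2 \<in> P" "B2 \<notin> Cy" "b B2 \<in> Cy"
    using cyc_entry[OF finP bP] ns unfolding Cy_def b_def by blast
  define C where "C = b B2"
  have CP: "C \<in> P" using B2 CyP by (auto simp: C_def)
  have B2C: "B2 \<noteq> C" using B2 by (auto simp: C_def)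
  obtain D where D: "D \<in> P" "D \<notin> b ` P" using bP ns unfolding b_def by blast
  obtain d0 where d0: "d0 \<in> D" using blk_ne[OF D(1)] by blast
  have inCy: "x \<in> \<Union>Cy \<longleftrightarrow> B \<in> Cy" if "B \<in> P" "x \<in> B" for B x
    using that CyP disj by blast
  have f2: "\<forall>x\<in>B2. f x \<in> C" using bpt[OF B2(1)] by (simp add: C_def)
  define e where "e = Emap B2 C f"
  have eS: "e \<in> S0" unfolding e_def by (rule E_in[OF B2(1) CP B2C f2])
  define \<sigma> where "\<sigma> x = (if x \<in> X then (if x \<in> \<Union>Cy then f x else x) else undefined)" for x
  define g where "g x = (if x \<in> X then (if x \<in> \<Union>Cy then x else if x \<in> B2 then d0 else f x) else undefined)" for x
  have \<sigma>T: "\<sigma> \<in> TT"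
  proof (rule TI)
    show "\<sigma> x = undefined" if "x \<notin> X" for x using that by (simp add: \<sigma>_def)
    fix B assume B: "B \<in> P"
    show "\<exists>C\<in>P. \<forall>x\<in>B. \<sigma> x \<in> C"
    proof (cases "B \<in> Cy")
      case True
      have "\<forall>x\<in>B. \<sigma> x \<in> b B"
      proof
        fix x assume x: "x \<in> B"
        have "x \<in> X" using x blk_sub[OF B] by blast
        moreover have "x \<in> \<Union>Cy" using inCy[OF B x] True by simp
        ultimately show "\<sigma> x \<in> b B" using bpt[OF B x] by (simp add: \<sigma>_def)
      qed
      then show ?thesis using bP B by blast
    next
      case False
      have "\<forall>x\<in>B. \<sigma> x \<in> B"
      proof
        fix x assume x: "x \<in> B"
        have "x \<in> X" using x blk_sub[OF B] by blast
        moreover have "x \<notin> \<Union>Cy" using inCy[OF B x] False by simp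
        ultimately show "\<sigma> x \<in> B" using x by (simp add: \<sigma>_def)
      qed
      then show ?thesis using B by blast
    qed
  qed
  have \<sigma>S: "\<sigma> \<in> SS"
  proof (rule SI[OF \<sigma>T])
    fix E assume E: "E \<in> P"
    show "\<exists>x\<in>X. \<sigma> x \<in> E"
    proof (cases "E \<in> Cy")
      case True
      then obtain B where B: "B \<in> Cy" "E = b B" using Cys by blast
      have BP: "B \<in> P" using B CyP by blast
      obtain x where x: "x \<in> B" using blk_ne[OF BP] by blast
      have xX: "x \<in> X" using x blk_sub[OF BP] by blast
      have "x \<in> \<Union>Cy" using inCy[OF BP x] B by simp
      then have "\<sigma> x = f x" using xX by (simp add: \<sigma>_def)
      then show ?thesis using bpt[OF BP x] B xX by auto
    next
      case False
      obtain x where x: "x \<in> E" using blk_ne[OF E] by blast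
      have xX: "x \<in> X" using x blk_sub[OF E] by blast
      have "x \<notin> \<Union>Cy" using inCy[OF E x] False by simp
      then have "\<sigma> x = x" using xX by (simp add: \<sigma>_def)
      then show ?thesis using x xX by (intro bexI[of _ x]) auto
    qed
  qed
  have gB: "\<forall>x\<in>B. g x \<in> (if B \<in> Cy then B else if B = B2 then D else b B)" if B: "B \<in> P" for B
  proof
    fix x assume x: "x \<in> B"
    have xX: "x \<in> X" using x blk_sub[OF B] by blast
    have c: "x \<in> \<Union>Cy \<longleftrightarrow> B \<in> Cy" using inCy[OF B x] .
    have d: "x \<in> B2 \<longleftrightarrow> B = B2" using disj[OF B B2(1) x] x by blast
    show "g x \<in> (if B \<in> Cy then B else if B = B2 then D else b B)"
      using xX c d x d0 bpt[OF B x] by (simp add: g_def)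
  qed
  have gT: "g \<in> TT"
  proof (rule TI)
    show "g x = undefined" if "x \<notin> X" for x using that by (simp add: g_def)
    fix B assume B: "B \<in> P"
    have "(if B \<in> Cy then B else if B = B2 then D else b B) \<in> P" using B D bP by auto
    then show "\<exists>C\<in>P. \<forall>x\<in>B. g x \<in> C" using gB[OF B] by blast
  qed
  have bmg: "bm g B = (if B \<in> Cy then B else if B = B2 then D else b B)" if B: "B \<in> P" for B
  proof -
    have 1: "(if B \<in> Cy then B else if B = B2 then D else b B) \<in> P" using B D bP by auto
    have 2: "g ` B \<subseteq> (if B \<in> Cy then B else if B = B2 then D else b B)" using gB[OF B] by blast
    show ?thesis by (rule bm_eq[OF B 1 2])
  qed
  have sub: "b ` P \<subseteq> bm g ` P"
  proof
    fix E assume "E \<in> b ` P"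
    then obtain B where B: "B \<in> P" "E = b B" by blast
    show "E \<in> bm g ` P"
    proof (cases "B \<in> Cy \<or> B = B2")
      case True
      then have ECy: "E \<in> Cy" using B B2 Cys by (auto)
      then have "E \<in> P" using CyP by blast
      moreover have "bm g E = E" using bmg[OF \<open>E \<in> P\<close>] ECy by simp
      ultimately show ?thesis by (metis image_eqI)
    next
      case False
      then have "bm g B = E" using bmg[OF B(1)] B by simp
      then show ?thesis using B by (metis image_eqI)
    qed
  qed
  have "D \<in> bm g ` P" using bmg[OF B2(1)] B2 by (metis image_eqI)
  then have psub: "b ` P \<subset> bm g ` P" using sub D(2) by blast
  have fin: "finite (bm g ` P)" using finP by simp
  have lt: "card (bm f ` P) < card (bm g ` P)" using psubset_card_mono[OF fin psub] by (simp add: b_def)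
  have eq: "f = compose X g (compose X e \<sigma>)"
  proof
    fix z
    show "f z = compose X g (compose X e \<sigma>) z"
    proof (cases "z \<in> X")
      case False then show ?thesis using T_ext[OF fT] by (simp add: compose_def)
    next
      case zX: True
      obtain B where B: "B \<in> P" "z \<in> B" using ex_blk[OF zX] by blast
      have fzX: "f z \<in> X" using T_X[OF fT zX] .
      consider "B \<in> Cy" | "B = B2" | "B \<notin> Cy \<and> B \<noteq> B2" by blast
      then show ?thesis
      proof cases
        case 1
        have zc: "z \<in> \<Union>Cy" using inCy[OF B] 1 by simp
        have bB: "b B \<in> Cy" using 1 Cys by blast
        have bBP: "b B \<in> P" using bB CyP by blast
        have fz: "f z \<in> b B" using bpt[OF B] .
        have fzc: "f z \<in> \<Union>Cy" using inCy[OF bBP fz] bB by simp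
        have fz2: "f z \<notin> B2" using disj[OF bBP B2(1) fz] bB B2(2) by blast
        have "compose X e \<sigma> z = f z" using zX zc fzX fz2 by (simp add: compose_def \<sigma>_def e_def Emap_def)
        then show ?thesis using zX fzX fzc by (simp add: compose_def g_def)
      next
        case 2
        have zc: "z \<notin> \<Union>Cy" using inCy[OF B] 2 B2(2) by simp
        have z2: "z \<in> B2" using B 2 by simp
        have fzC: "f z \<in> C" using f2 z2 by blast
        have fzc: "f z \<in> \<Union>Cy" using inCy[OF CP fzC] B2(3) by (simp add: C_def)
        have "compose X e \<sigma> z = f z" using zX zc z2 by (simp add: compose_def \<sigma>_def e_def Emap_def)
        then show ?thesis using zX fzX fzc by (simp add: compose_def g_def)
      next
        case 3
        have zc: "z \<notin> \<Union>Cy" using inCy[OF B] 3 by simp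
        have z2: "z \<notin> B2" using disj[OF B(1) B2(1) B(2)] 3 by blast
        have "compose X e \<sigma> z = z" using zX zc z2 by (simp add: compose_def \<sigma>_def e_def Emap_def)
        then show ?thesis using zX zc z2 by (simp add: compose_def g_def)
      qed
    qed
  qed
  show ?thesis using \<sigma>S eS gT lt eq by blast
qed

lemma all_in: "f \<in> TT \<Longrightarrow> f \<in> S0"
proof (induction "card P - card (bm f ` P)" arbitrary: f rule: less_induct)
  case less
  show ?case
  proof (cases "bm f ` P = P")
    case True
    then have "f \<in> SS" using S_iff less.prems by blast
    then show ?thesis by (auto intro: sgen.base)
  next
    case False
    obtain \<sigma> e g where d: "\<sigma> \<in> SS" "e \<in> S0" "g \<in> TT" "card (bm f ` P) < card (bm g ` P)"
      "f = compose X g (compose X e \<sigma>)" using decomp[OF less.prems False] by blast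
    have "bm g ` P \<subseteq> P" using bm(1)[OF d(3)] by blast
    then have "card (bm g ` P) \<le> card P" using finP card_mono by blast
    then have "card P - card (bm g ` P) < card P - card (bm f ` P)" using d(4) by simp
    then have gS: "g \<in> S0" using less.hyps d(3) by blast
    have "\<sigma> \<in> S0" using d(1) by (auto intro: sgen.base)
    then have "compose X e \<sigma> \<in> S0" using d(2) by (rule sgen.comp)
    then have "compose X g (compose X e \<sigma>) \<in> S0" using gS by (rule sgen.comp)
    then show ?thesis using d(5) by simp
  qed
qed

lemma S0_eq: "S0 = TT"
proof
  show "S0 \<subseteq> TT"
  proof
    fix f assume "f \<in> S0"
    then show "f \<in> TT" using sgen_T S_T W0_T by blast
  qed
  show "TT \<subseteq> S0" using all_in by blast
qed

end

context pt begin

lemma Ty_fin: "finite Ty"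
proof -
  have "Ty \<subseteq> (\<lambda>(B1, B2). {card B1, card B2}) ` (P \<times> P)" unfolding Ty_def by auto
  moreover have "finite ((\<lambda>(B1, B2). {card B1, card B2}) ` (P \<times> P))" using finP by simp
  ultimately show ?thesis using finite_subset by blast
qed

lemma relrank_eq: "relrank X TT SS = card Ty"
proof -
  define Pr where "Pr k = (\<exists>W. W \<subseteq> TT \<and> finite W \<and> card W = k \<and> sgen X (SS \<union> W) = TT)" for k
  have rr: "relrank X TT SS = (LEAST k. Pr k)" unfolding relrank_def Pr_def by simp
  have finW0: "finite W0" unfolding W0_def using Ty_fin by simp
  have P0: "Pr (card W0)" unfolding Pr_def using W0_T finW0 S0_eq by blast
  have le1: "(LEAST k. Pr k) \<le> card W0" using P0 by (rule Least_le)
  have le2: "card W0 \<le> card Ty" unfolding W0_def by (rule card_image_le[OF Ty_fin])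
  have PL: "Pr (LEAST k. Pr k)" using P0 by (rule LeastI)
  then obtain W where W: "W \<subseteq> TT" "finite W" "card W = (LEAST k. Pr k)" "sgen X (SS \<union> W) = TT"
    unfolding Pr_def by blast
  have ex: "\<forall>\<tau>\<in>Ty. \<exists>w\<in>W. w \<in> G \<tau>"
  proof
    fix \<tau> assume t: "\<tau> \<in> Ty"
    have "wt \<tau> \<in> G \<tau>" using wt_G[OF t] .
    moreover have "wt \<tau> \<in> TT" using W0_T t unfolding W0_def by blast
    then have "wt \<tau> \<in> sgen X (SS \<union> W)" using W(4) by simp
    ultimately show "\<exists>w\<in>W. w \<in> G \<tau>" using G_closed W(1) by blast
  qed
  then obtain ch where ch: "\<forall>\<tau>\<in>Ty. ch \<tau> \<in> W \<and> ch \<tau> \<in> G \<tau>" by metis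
  have "inj_on ch Ty"
  proof (rule inj_onI)
    fix \<tau> \<tau>' assume t: "\<tau> \<in> Ty" "\<tau>' \<in> Ty" "ch \<tau> = ch \<tau>'"
    have "ch \<tau> \<in> G \<tau>" using ch t(1) by blast
    moreover have "ch \<tau> \<in> G \<tau>'" using ch t(2,3) by simp
    ultimately show "\<tau> = \<tau>'" by (rule G_disj)
  qed
  moreover have "ch ` Ty \<subseteq> W" using ch by blast
  ultimately have "card Ty \<le> card W" using card_inj_on_le W(2) by blast
  then show ?thesis using rr le1 le2 W(3) by simp
qed

definition Sz :: "nat set" where "Sz = card ` P"
definition Sz2 :: "nat set" where "Sz2 = {a. \<exists>B1\<in>P. \<exists>B2\<in>P. B1 \<noteq> B2 \<and> card B1 = a \<and> card B2 = a}"

lemma TyI: "B1 \<in> P \<Longrightarrow> B2 \<in> P \<Longrightarrow> B1 \<noteq> B2 \<Longrightarrow> {card B1, card B2} \<in> Ty"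
  unfolding Ty_def by (rule CollectI, rule exI[of _ B1], rule exI[of _ B2]) simp

lemma Ty_split: "Ty = {A. A \<subseteq> Sz \<and> card A = 2} \<union> (\<lambda>a. {a}) ` Sz2"
proof
  show "Ty \<subseteq> {A. A \<subseteq> Sz \<and> card A = 2} \<union> (\<lambda>a. {a}) ` Sz2"
  proof
    fix A assume "A \<in> Ty"
    then have "\<exists>B1 B2. A = {card B1, card B2} \<and> B1 \<in> P \<and> B2 \<in> P \<and> B1 \<noteq> B2"
      unfolding Ty_def by (simp only: mem_Collect_eq)
    then obtain B1 B2 where B: "B1 \<in> P" "B2 \<in> P" "B1 \<noteq> B2" "A = {card B1, card B2}"
      by blast
    show "A \<in> {A. A \<subseteq> Sz \<and> card A = 2} \<union> (\<lambda>a. {a}) ` Sz2"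
    proof (cases "card B1 = card B2")
      case True
      have "card B1 \<in> Sz2" unfolding Sz2_def
        by (rule CollectI, rule bexI[of _ B1], rule bexI[of _ B2]) (use B True in auto)
      moreover have "A = {card B1}" using B(4) True by simp
      ultimately have "A \<in> (\<lambda>a. {a}) ` Sz2" by (rule rev_image_eqI)
      then show ?thesis by (rule UnI2)
    next
      case False
      have "A \<subseteq> Sz" unfolding B(4) Sz_def using B(1,2) by auto
      moreover have "card A = 2" using False B(4) by simp
      ultimately show ?thesis by (intro UnI1 CollectI conjI)
    qed
  qed
  show "{A. A \<subseteq> Sz \<and> card A = 2} \<union> (\<lambda>a. {a}) ` Sz2 \<subseteq> Ty"
  proof
    fix A assume A: "A \<in> {A. A \<subseteq> Sz \<and> card A = 2} \<union> (\<lambda>a. {a}) ` Sz2"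
    show "A \<in> Ty"
    proof (cases "A \<in> (\<lambda>a. {a}) ` Sz2")
      case False
      then have 1: "A \<subseteq> Sz" "card A = 2" using A by blast+
      obtain x y where xy: "A = {x, y}" "x \<noteq> y" using 1(2) card_2_iff[of A] by blast
      have "x \<in> Sz" "y \<in> Sz" using 1(1) xy(1) by blast+
      then obtain B1 B2 where B: "B1 \<in> P" "B2 \<in> P" "x = card B1" "y = card B2"
        unfolding Sz_def by blast
      have "B1 \<noteq> B2" using B xy(2) by blast
      then have "{card B1, card B2} \<in> Ty" using TyI B(1,2) by blast
      then show ?thesis using xy(1) B(3,4) by simp
    next
      case True
      then obtain a where a: "a \<in> Sz2" "A = {a}" by blast
      then obtain B1 B2 where B: "B1 \<in> P" "B2 \<in> P" "B1 \<noteq> B2" "card B1 = a" "card B2 = a"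
        unfolding Sz2_def by blast
      have "{card B1, card B2} \<in> Ty" using TyI B(1,2,3) by blast
      then show ?thesis using a(2) B(4,5) by simp
    qed
  qed
qed

lemma card_Ty: "card Ty = (card Sz choose 2) + card Sz2"
proof -
  have fS: "finite Sz" unfolding Sz_def using finP by simp
  have fS2: "finite Sz2"
  proof -
    have "Sz2 \<subseteq> Sz" unfolding Sz2_def Sz_def by blast
    then show ?thesis using fS finite_subset by blast
  qed
  have f1: "finite {A. A \<subseteq> Sz \<and> card A = 2}" using fS by simp
  have f2: "finite ((\<lambda>a. {a}) ` Sz2)" using fS2 by simp
  have d: "{A. A \<subseteq> Sz \<and> card A = 2} \<inter> (\<lambda>a. {a}) ` Sz2 = {}" by auto
  have "card Ty = card {A. A \<subseteq> Sz \<and> card A = 2} + card ((\<lambda>a. {a}) ` Sz2)"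
    unfolding Ty_split by (rule card_Un_disjoint[OF f1 f2 d])
  moreover have "card {A. A \<subseteq> Sz \<and> card A = 2} = card Sz choose 2" using n_subsets[OF fS] by simp
  moreover have "card ((\<lambda>a. {a}) ` Sz2) = card Sz2" by (rule card_image) (simp add: inj_on_def)
  ultimately show ?thesis by simp
qed

end

lemma card_ge2: assumes "finite S" shows "2 \<le> card S \<longleftrightarrow> (\<exists>x\<in>S. \<exists>y\<in>S. x \<noteq> y)"
proof
  assume c: "2 \<le> card S"
  then have "S \<noteq> {}" by auto
  then obtain x where x: "x \<in> S" by blast
  have "card (S - {x}) = card S - 1" using x assms by simp
  then have "card (S - {x}) \<noteq> 0" using c by simp
  then have "S - {x} \<noteq> {}" by (metis card.empty)
  then obtain y where "y \<in> S" "y \<noteq> x" by blast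
  then show "\<exists>x\<in>S. \<exists>y\<in>S. x \<noteq> y" using x by blast
next
  assume "\<exists>x\<in>S. \<exists>y\<in>S. x \<noteq> y"
  then obtain x y where xy: "x \<in> S" "y \<in> S" "x \<noteq> y" by blast
  then have "{x, y} \<subseteq> S" by blast
  then have "card {x, y} \<le> card S" using assms card_mono by blast
  then show "2 \<le> card S" using xy(3) by simp
qed

lemma choose2_Suc: "Suc k choose 2 = (k choose 2) + k"
  by (simp add: numeral_2_eq_2)

theorem corollary3p4:
  fixes X :: "'a set" and P :: "'a set set"
    and p q t :: nat and n m l :: "nat \<Rightarrow> nat"
  assumes "finite X" "X \<noteq> {}" "partition_on X P"
    and "\<forall>i<p. n i \<ge> 2 \<and> m i \<ge> 2"
    and "inj_on n {..<p}"
    and "\<forall>j<q. l j \<ge> 2"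
    and "inj_on l {..<q}"
    and "l ` {..<q} \<inter> n ` {..<p} = {}"
    and "\<forall>i<p. card {B \<in> P. card B = n i} = m i"
    and "\<forall>j<q. card {B \<in> P. card B = l j} = 1"
    and "card {B \<in> P. card B = 1} = t"
    and "\<forall>B\<in>P. card B = 1 \<or> card B \<in> n ` {..<p} \<or> card B \<in> l ` {..<q}"
  shows "relrank X (Tpart X P) (Sigmapart X P) = ((p + q) choose 2) + p + hfun p q t"
proof -
  interpret pt X P using assms(1,3) by unfold_locales
  define N where "N = n ` {..<p}"
  define L where "L = l ` {..<q}"
  define O1 where "O1 = (if t > 0 then {1::nat} else {})"
  define O2 where "O2 = (if t \<ge> 2 then {1::nat} else {})"
  have finK: "\<And>a. finite {B \<in> P. card B = a}" using finP by simp
  have ne: "\<exists>B\<in>P. card B = a" if "card {B \<in> P. card B = a} \<noteq> 0" for a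
  proof -
    have "{B \<in> P. card B = a} \<noteq> {}" using that by (metis card.empty)
    then show ?thesis by blast
  qed
  have two: "(\<exists>B1\<in>P. \<exists>B2\<in>P. B1 \<noteq> B2 \<and> card B1 = a \<and> card B2 = a) \<longleftrightarrow> 2 \<le> card {B \<in> P. card B = a}" for a
    using card_ge2[OF finK[of a]] by blast
  have Nge: "\<forall>a\<in>N. a \<ge> 2" using assms(4) unfolding N_def by auto
  have Lge: "\<forall>a\<in>L. a \<ge> 2" using assms(6) unfolding L_def by auto
  have Sz_eq: "Sz = N \<union> L \<union> O1"
  proof
    show "Sz \<subseteq> N \<union> L \<union> O1"
    proof
      fix a assume "a \<in> Sz"
      then obtain B where B: "B \<in> P" "a = card B" unfolding Sz_def by blast
      consider "card B = 1" | "card B \<in> N" | "card B \<in> L" using assms(12) B(1) unfolding N_def L_def by blast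
      then show "a \<in> N \<union> L \<union> O1"
      proof cases
        case 1
        then have "B \<in> {B \<in> P. card B = 1}" using B by simp
        then have "t \<noteq> 0" using assms(11) finK[of 1] by (metis card_0_eq empty_iff)
        then show ?thesis using 1 B unfolding O1_def by simp
      qed (use B in auto)
    qed
    show "N \<union> L \<union> O1 \<subseteq> Sz"
    proof
      fix a assume a: "a \<in> N \<union> L \<union> O1"
      have "card {B \<in> P. card B = a} \<noteq> 0"
      proof -
        consider "a \<in> N" | "a \<in> L" | "a \<in> O1" using a by blast
        then show ?thesis
        proof cases
          case 1 then obtain i where "i < p" "a = n i" unfolding N_def by blast
          then show ?thesis using assms(4,9) by fastforce
        next
          case 2 then obtain j where "j < q" "a = l j" unfolding L_def by blast
          then show ?thesis using assms(10) by simp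
        next
          case 3 then show ?thesis using assms(11) unfolding O1_def by (auto split: if_splits)
        qed
      qed
      then show "a \<in> Sz" using ne unfolding Sz_def by blast
    qed
  qed
  have Sz2_eq: "Sz2 = N \<union> O2"
  proof
    show "Sz2 \<subseteq> N \<union> O2"
    proof
      fix a assume a: "a \<in> Sz2"
      then have c2: "2 \<le> card {B \<in> P. card B = a}" using two unfolding Sz2_def by blast
      have "a \<in> Sz" using a unfolding Sz2_def Sz_def by blast
      then consider "a \<in> N" | "a \<in> L" | "a \<in> O1" using Sz_eq by blast
      then show "a \<in> N \<union> O2"
      proof cases
        case 2 then obtain j where "j < q" "a = l j" unfolding L_def by blast
        then have False using assms(10) c2 by simp
        then show ?thesis ..
      next
        case 3 then have "a = 1" unfolding O1_def by (auto split: if_splits)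
        then show ?thesis using c2 assms(11) unfolding O2_def by simp
      qed simp
    qed
    show "N \<union> O2 \<subseteq> Sz2"
    proof
      fix a assume a: "a \<in> N \<union> O2"
      have "2 \<le> card {B \<in> P. card B = a}"
      proof (cases "a \<in> N")
        case True then obtain i where "i < p" "a = n i" unfolding N_def by blast
        then show ?thesis using assms(4,9) by fastforce
      next
        case False then have "a = 1" "t \<ge> 2" using a unfolding O2_def by (auto split: if_splits)
        then show ?thesis using assms(11) by simp
      qed
      then show "a \<in> Sz2" using two unfolding Sz2_def by blast
    qed
  qed
  have cN: "card N = p" unfolding N_def using card_image[OF assms(5)] by simp
  have cL: "card L = q" unfolding L_def using card_image[OF assms(7)] by simp
  have fN: "finite N" "finite L" "finite O1" "finite O2" unfolding N_def L_def O1_def O2_def by auto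
  have dNL: "N \<inter> L = {}" using assms(8) unfolding N_def L_def by blast
  have dO1: "(N \<union> L) \<inter> O1 = {}" using Nge Lge unfolding O1_def by auto
  have dO2: "N \<inter> O2 = {}" using Nge unfolding O2_def by auto
  have cSz: "card Sz = p + q + (if t > 0 then 1 else 0)"
    unfolding Sz_eq using card_Un_disjoint[OF _ _ dO1] card_Un_disjoint[OF _ _ dNL] fN cN cL
    by (simp add: O1_def)
  have cSz2: "card Sz2 = p + (if t \<ge> 2 then 1 else 0)"
    unfolding Sz2_eq using card_Un_disjoint[OF _ _ dO2] fN cN
    by (simp add: O2_def)
  have "relrank X (Tpart X P) (Sigmapart X P) = card Ty" by (rule relrank_eq)
  also have "\<dots> = (card Sz choose 2) + card Sz2" by (rule card_Ty)
  also have "\<dots> = ((p + q) choose 2) + p + hfun p q t"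
    unfolding cSz cSz2 hfun_def using choose2_Suc[of "p + q"] by auto
  finally show ?thesis .
qed

end
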